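(* Let $P$ be a finite poset and $R$ an indecomposable commutative unital ring. Then the group $\mathrm{Aut}(I^3(P,R))$ of $R$-linear algebra automorphisms of $I^3(P,R)$ is isomorphic to the automorphism group $\mathrm{Aut}(P)$ of the poset $P$.
   Context: A commutative ring $R$ is indecomposable if its only idempotents are $0$ and $1$. For a finite poset $P$, let $P^3_\le=\{(x,y,z)\in P^3: x\le y\le z\}$. The third partial flag incidence algebra $I^3(P,R)$ is the $R$-module of all functions $f:P^3_\le\to R$ (pointwise operations) with the (non-associative) multiplication $(fg)(x_1,x_2,x_3)=\sum f(x_1,y_1,y_2)\,g(y_1,y_2,x_3)$, the sum over all $y_1,y_2$ with $x_1\le y_1\le x_2\le y_2\le x_3$. *)

theory Defs
  imports "HOL-Algebra.Group" "HOL-Library.FuncSet"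
begin

definition indecomposable_ring :: "'r::comm_ring_1 itself \<Rightarrow> bool" where
  "indecomposable_ring _ \<longleftrightarrow> (0::'r) \<noteq> 1 \<and> (\<forall>e::'r. e * e = e \<longrightarrow> e = 0 \<or> e = 1)"

text \<open>The carrier of the third partial flag incidence algebra: functions on
  the triples x \<le> y \<le> z (represented as functions on all triples vanishing elsewhere).\<close>
definition I3 :: "('a::{finite,order} \<times> 'a \<times> 'a \<Rightarrow> 'r::comm_ring_1) set" where
  "I3 = {f. \<forall>x y z. \<not> (x \<le> y \<and> y \<le> z) \<longrightarrow> f (x, y, z) = 0}"

definition I3_mult :: "('a::{finite,order} \<times> 'a \<times> 'a \<Rightarrow> 'r::comm_ring_1)
    \<Rightarrow> ('a \<times> 'a \<times> 'a \<Rightarrow> 'r) \<Rightarrow> ('a \<times> 'a \<times> 'a \<Rightarrow> 'r)" where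
  "I3_mult f g = (\<lambda>(x1, x2, x3).
     if x1 \<le> x2 \<and> x2 \<le> x3 then
       (\<Sum>(y1, y2) \<in> {(y1, y2). x1 \<le> y1 \<and> y1 \<le> x2 \<and> x2 \<le> y2 \<and> y2 \<le> x3}.
          f (x1, y1, y2) * g (y1, y2, x3))
     else 0)"

definition I3_smult :: "'r::comm_ring_1 \<Rightarrow> ('a \<times> 'a \<times> 'a \<Rightarrow> 'r) \<Rightarrow> ('a \<times> 'a \<times> 'a \<Rightarrow> 'r)" where
  "I3_smult r f = (\<lambda>t. r * f t)"

definition I3_auts :: "(('a::{finite,order} \<times> 'a \<times> 'a \<Rightarrow> 'r::comm_ring_1)
    \<Rightarrow> ('a \<times> 'a \<times> 'a \<Rightarrow> 'r)) set" where
  "I3_auts = {\<phi>. \<phi> \<in> extensional I3 \<and> bij_betw \<phi> I3 I3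
     \<and> (\<forall>f\<in>I3. \<forall>g\<in>I3. \<phi> (\<lambda>t. f t + g t) = (\<lambda>t. \<phi> f t + \<phi> g t))
     \<and> (\<forall>r. \<forall>f\<in>I3. \<phi> (I3_smult r f) = I3_smult r (\<phi> f))
     \<and> (\<forall>f\<in>I3. \<forall>g\<in>I3. \<phi> (I3_mult f g) = I3_mult (\<phi> f) (\<phi> g))}"

definition Aut_I3 :: "('a::{finite,order} \<times> 'a \<times> 'a \<Rightarrow> 'r::comm_ring_1) itself
    \<Rightarrow> (('a \<times> 'a \<times> 'a \<Rightarrow> 'r) \<Rightarrow> ('a \<times> 'a \<times> 'a \<Rightarrow> 'r)) monoid" where
  "Aut_I3 _ = \<lparr>carrier = I3_auts, mult = (\<lambda>\<phi> \<psi>. compose I3 \<phi> \<psi>),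
              one = (\<lambda>f\<in>I3. f)\<rparr>"

definition Aut_poset :: "'a::order itself \<Rightarrow> ('a \<Rightarrow> 'a) monoid" where
  "Aut_poset _ = \<lparr>carrier = {\<sigma>. bij \<sigma> \<and> (\<forall>x y. x \<le> y \<longleftrightarrow> \<sigma> x \<le> \<sigma> y)},
                  mult = (\<circ>), one = id\<rparr>"

end

theory Submission
  imports Defs
begin

definition E :: "'a \<times> 'a \<times> 'a \<Rightarrow> 'a \<times> 'a \<times> 'a \<Rightarrow> 'r::comm_ring_1" where
  "E t = (\<lambda>s. if s = t then 1 else 0)"

lemma sum_single:
  assumes "finite S" "\<And>p. p \<in> S \<Longrightarrow> p \<noteq> p0 \<Longrightarrow> h p = 0"
  shows "sum h S = (if p0 \<in> S then h p0 else (0::'b::comm_monoid_add))"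
proof (cases "p0 \<in> S")
  case True
  then have "sum h S = h p0 + sum h (S - {p0})" using assms(1) by (simp add: sum.remove)
  also have "sum h (S - {p0}) = 0" using assms(2) by (intro sum.neutral) auto
  finally show ?thesis using True by simp
next
  case False
  then have "sum h S = 0" using assms(2) by (intro sum.neutral) metis
  then show ?thesis using False by simp
qed

lemma mult_single:
  fixes f g :: "'a::{finite,order} \<times> 'a \<times> 'a \<Rightarrow> 'r::comm_ring_1"
  assumes "\<And>y1 y2. x1 \<le> y1 \<Longrightarrow> y1 \<le> x2 \<Longrightarrow> x2 \<le> y2 \<Longrightarrow> y2 \<le> x3 \<Longrightarrow> (y1, y2) \<noteq> (c, d)
     \<Longrightarrow> f (x1, y1, y2) * g (y1, y2, x3) = 0"
  shows "I3_mult f g (x1, x2, x3) =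
    (if x1 \<le> c \<and> c \<le> x2 \<and> x2 \<le> d \<and> d \<le> x3 then f (x1, c, d) * g (c, d, x3) else 0)"
proof -
  let ?S = "{(y1, y2). x1 \<le> y1 \<and> y1 \<le> x2 \<and> x2 \<le> y2 \<and> y2 \<le> x3}"
  have fin: "finite ?S" by (rule finite_subset[OF subset_UNIV]) simp
  have "(\<Sum>(y1, y2) \<in> ?S. f (x1, y1, y2) * g (y1, y2, x3)) =
     (if (c, d) \<in> ?S then (\<lambda>(y1, y2). f (x1, y1, y2) * g (y1, y2, x3)) (c, d) else 0)"
    by (rule sum_single[OF fin]) (use assms in auto)
  then show ?thesis unfolding I3_mult_def
    by (auto intro: order_trans)
qed

lemma mult_E_left:
  "I3_mult (E (\<alpha>, \<beta>, \<gamma>)) (a :: 'a::{finite,order} \<times> 'a \<times> 'a \<Rightarrow> 'r::comm_ring_1) (x1, x2, x3) =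
   (if x1 = \<alpha> \<and> x1 \<le> \<beta> \<and> \<beta> \<le> x2 \<and> x2 \<le> \<gamma> \<and> \<gamma> \<le> x3 then a (\<beta>, \<gamma>, x3) else 0)"
  by (subst mult_single[where c = \<beta> and d = \<gamma>]) (auto simp: E_def)

lemma mult_E_right:
  "I3_mult (a :: 'a::{finite,order} \<times> 'a \<times> 'a \<Rightarrow> 'r::comm_ring_1) (E (\<mu>, \<nu>, \<rho>)) (x1, x2, x3) =
   (if x3 = \<rho> \<and> x1 \<le> \<mu> \<and> \<mu> \<le> x2 \<and> x2 \<le> \<nu> \<and> \<nu> \<le> x3 then a (x1, \<mu>, \<nu>) else 0)"
  by (subst mult_single[where c = \<mu> and d = \<nu>]) (auto simp: E_def)

lemma mult_diag:
  "I3_mult (f :: 'a::{finite,order} \<times> 'a \<times> 'a \<Rightarrow> 'r::comm_ring_1) g (y, y, y) = f (y, y, y) * g (y, y, y)"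
  by (subst mult_single[where c = y and d = y]) (auto dest: antisym)

lemma mult_in: "I3_mult f g \<in> I3"
  unfolding I3_def I3_mult_def by auto

lemma E_in: "x \<le> y \<Longrightarrow> y \<le> z \<Longrightarrow> (E (x, y, z) :: _ \<Rightarrow> 'r::comm_ring_1) \<in> I3"
  unfolding I3_def E_def by auto

lemma zero_in: "(\<lambda>s. 0) \<in> I3" unfolding I3_def by auto

lemma E_EE:
  assumes "p \<le> q" "q \<le> r"
  shows "I3_mult (E (p, q, q)) (E (q, q, r)) = (E (p, q, r) :: 'a::{finite,order} \<times> 'a \<times> 'a \<Rightarrow> 'r::comm_ring_1)"
  using assms unfolding fun_eq_iff by (clarsimp simp: mult_E_left) (auto simp: E_def)

lemma mult_Delta_right:
  "I3_mult (u :: 'a::{finite,order} \<times> 'a \<times> 'a \<Rightarrow> 'r::comm_ring_1) (E (a, a, a)) (x1, x2, x3) =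
   (if x2 = a \<and> x3 = a \<and> x1 \<le> a then u (x1, a, a) else 0)"
  by (simp add: mult_E_right) (auto dest: antisym)

lemma mult_Delta_left:
  "I3_mult (E (a, a, a)) (v :: 'a::{finite,order} \<times> 'a \<times> 'a \<Rightarrow> 'r::comm_ring_1) (x1, x2, x3) =
   (if x1 = a \<and> x2 = a \<and> a \<le> x3 then v (a, a, x3) else 0)"
  by (simp add: mult_E_left) (auto dest: antisym)

lemma EL1: "a \<le> b \<Longrightarrow> I3_mult (E (a, a, a)) (E (a, a, b)) = (E (a, a, b) :: 'a::{finite,order} \<times> 'a \<times> 'a \<Rightarrow> 'r::comm_ring_1)"
  unfolding fun_eq_iff by (clarsimp simp: mult_Delta_left) (auto simp: E_def)

lemma EL2: "a \<le> b \<Longrightarrow> I3_mult (E (a, b, b)) (E (b, b, b)) = (E (a, b, b) :: 'a::{finite,order} \<times> 'a \<times> 'a \<Rightarrow> 'r::comm_ring_1)"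
  unfolding fun_eq_iff by (clarsimp simp: mult_Delta_right) (auto simp: E_def)

lemma EL3: "a \<le> b \<Longrightarrow> I3_mult (E (a, a, a)) (I3_mult (E (a, a, b)) (E (a, b, b))) = (E (a, a, b) :: 'a::{finite,order} \<times> 'a \<times> 'a \<Rightarrow> 'r::comm_ring_1)"
  unfolding fun_eq_iff by (clarsimp simp: mult_Delta_left mult_E_left) (auto simp: E_def)

lemma EL4: "a \<le> b \<Longrightarrow> I3_mult (I3_mult (E (a, a, b)) (E (a, b, b))) (E (b, b, b)) = (E (a, b, b) :: 'a::{finite,order} \<times> 'a \<times> 'a \<Rightarrow> 'r::comm_ring_1)"
  unfolding fun_eq_iff by (clarsimp simp: mult_Delta_right mult_E_left) (auto simp: E_def)

definition tri :: "('a::order \<times> 'a \<times> 'a) set" where "tri = {(x, y, z). x \<le> y \<and> y \<le> z}"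

definition Phi :: "('a::{finite,order} \<Rightarrow> 'a) \<Rightarrow> ('a \<times> 'a \<times> 'a \<Rightarrow> 'r::comm_ring_1) \<Rightarrow> ('a \<times> 'a \<times> 'a \<Rightarrow> 'r)" where
  "Phi \<sigma> = (\<lambda>f\<in>I3. (\<lambda>(x, y, z). f (inv_into UNIV \<sigma> x, inv_into UNIV \<sigma> y, inv_into UNIV \<sigma> z)))"

lemma E_in_tri: "t \<in> tri \<Longrightarrow> (E t :: _ \<Rightarrow> 'r::comm_ring_1) \<in> I3"
  unfolding tri_def by (cases t) (auto intro: E_in)

lemma sumE_in: fixes A :: "('a::{finite,order} \<times> 'a \<times> 'a) set" shows "A \<subseteq> tri \<Longrightarrow> (\<lambda>s. \<Sum>t\<in>A. (c t :: 'r::comm_ring_1) * E t s) \<in> I3"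
  unfolding I3_def
proof (clarify)
  fix x y z :: 'a assume A: "A \<subseteq> tri" and n: "\<not> (x \<le> y \<and> y \<le> z)"
  have "(x, y, z) \<notin> tri" using n by (simp add: tri_def)
  then have "\<And>t. t \<in> A \<Longrightarrow> E t (x, y, z) = (0::'r)" using A by (auto simp: E_def)
  then show "(\<Sum>t\<in>A. c t * E t (x, y, z)) = 0" by simp
qed

lemma decomp: "(f :: 'a::{finite,order} \<times> 'a \<times> 'a \<Rightarrow> 'r::comm_ring_1) \<in> I3 \<Longrightarrow> f = (\<lambda>s. \<Sum>t\<in>tri. f t * E t s)"
proof (rule ext)
  fix s assume f: "f \<in> I3"
  have fin: "finite (tri :: ('a \<times> 'a \<times> 'a) set)" by (rule finite_subset[OF subset_UNIV]) simp
  have "(\<Sum>t\<in>tri. f t * E t s) = (if s \<in> tri then f s * E s s else 0)"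
    by (rule sum_single[OF fin]) (auto simp: E_def)
  also have "\<dots> = f s" using f by (cases s) (auto simp: E_def I3_def tri_def)
  finally show "f s = (\<Sum>t\<in>tri. f t * E t s)" by simp
qed

locale autI3 =
  fixes \<phi> :: "('a::{finite,order} \<times> 'a \<times> 'a \<Rightarrow> 'r::comm_ring_1) \<Rightarrow> ('a \<times> 'a \<times> 'a \<Rightarrow> 'r)"
  assumes aut: "\<phi> \<in> I3_auts"
  and indec: "indecomposable_ring TYPE('r)"
begin

lemma zero_ne_one: "(0::'r) \<noteq> 1" using indec unfolding indecomposable_ring_def by auto
lemma idem: "(e::'r) * e = e \<Longrightarrow> e = 0 \<or> e = 1" using indec unfolding indecomposable_ring_def by auto

lemma a_bij: "bij_betw \<phi> I3 I3" using aut unfolding I3_auts_def by auto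
lemma a_in_I3: "f \<in> I3 \<Longrightarrow> \<phi> f \<in> I3" using a_bij by (auto dest: bij_betwE)
lemma a_inj: "f \<in> I3 \<Longrightarrow> g \<in> I3 \<Longrightarrow> \<phi> f = \<phi> g \<Longrightarrow> f = g"
  using a_bij unfolding bij_betw_def inj_on_def by auto
lemma a_surj: "g \<in> I3 \<Longrightarrow> \<exists>f\<in>I3. g = \<phi> f"
  using a_bij unfolding bij_betw_def by auto
lemma a_add: "f \<in> I3 \<Longrightarrow> g \<in> I3 \<Longrightarrow> \<phi> (\<lambda>t. f t + g t) = (\<lambda>t. \<phi> f t + \<phi> g t)"
  using aut unfolding I3_auts_def by auto
lemma a_smult: "f \<in> I3 \<Longrightarrow> \<phi> (I3_smult r f) = I3_smult r (\<phi> f)"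
  using aut unfolding I3_auts_def by auto
lemma a_mult: "f \<in> I3 \<Longrightarrow> g \<in> I3 \<Longrightarrow> \<phi> (I3_mult f g) = I3_mult (\<phi> f) (\<phi> g)"
  using aut unfolding I3_auts_def by auto
lemma a_zero: "\<phi> (\<lambda>s. 0) = (\<lambda>s. 0)"
proof -
  have "\<phi> (\<lambda>s. 0) = \<phi> (\<lambda>t. (\<lambda>s. 0) t + (\<lambda>s. 0) t)" by simp
  also have "\<dots> = (\<lambda>t. \<phi> (\<lambda>s. 0) t + \<phi> (\<lambda>s. 0) t)" by (rule a_add[OF zero_in zero_in])
  finally show ?thesis by (simp add: fun_eq_iff)
qed

lemma a_nonzero: "f \<in> I3 \<Longrightarrow> f \<noteq> (\<lambda>s. 0) \<Longrightarrow> \<phi> f \<noteq> (\<lambda>s. 0)"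
  using a_inj[OF _ zero_in] a_zero by metis

lemma E_nonzero: "(E t :: _ \<Rightarrow> 'r) \<noteq> (\<lambda>s. 0)"
proof
  assume "(E t :: _ \<Rightarrow> 'r) = (\<lambda>s. 0)"
  then have "(E t :: _ \<Rightarrow> 'r) t = 0" by simp
  then show False using zero_ne_one by (simp add: E_def)
qed

lemma diag_nucleus:
  "I3_mult (I3_mult u (E (a, a, a))) v = I3_mult u (I3_mult (E (a, a, a)) v)"
proof -
  have "I3_mult (I3_mult u (E (a, a, a))) v (x1, x2, x3) = I3_mult u (I3_mult (E (a, a, a)) v) (x1, x2, x3)"
    for x1 x2 x3
  proof -
    have L: "I3_mult (I3_mult u (E (a, a, a))) v (x1, x2, x3) = (if x1 \<le> a \<and> a \<le> x2 \<and> x2 \<le> a \<and> a \<le> x3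
       then I3_mult u (E (a, a, a)) (x1, a, a) * v (a, a, x3) else 0)"
      by (rule mult_single) (auto simp: mult_Delta_right)
    have R: "I3_mult u (I3_mult (E (a, a, a)) v) (x1, x2, x3) = (if x1 \<le> a \<and> a \<le> x2 \<and> x2 \<le> a \<and> a \<le> x3
       then u (x1, a, a) * I3_mult (E (a, a, a)) v (a, a, x3) else 0)"
      by (rule mult_single) (auto simp: mult_Delta_left)
    show ?thesis unfolding L R by (auto simp: mult_Delta_left mult_Delta_right)
  qed
  then show ?thesis by (simp add: fun_eq_iff)
qed

lemma diag_supp:
  assumes "p \<le> q" "q \<le> r" "\<not> (p = q \<and> q = r)"
  shows "\<phi> (E (a, a, a)) (p, q, r) = 0"
proof -
  let ?A = "\<phi> (E (a, a, a))"
  have nuc: "I3_mult (I3_mult u ?A) v = I3_mult u (I3_mult ?A v)" if u_in: "u \<in> I3" and v_in: "v \<in> I3" for u v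
  proof -
    obtain u' where u': "u' \<in> I3" "u = \<phi> u'" using a_surj[OF u_in] by blast
    obtain v' where v': "v' \<in> I3" "v = \<phi> v'" using a_surj[OF v_in] by blast
    have Ein: "(E (a, a, a) :: _ \<Rightarrow> 'r) \<in> I3" by (rule E_in) auto
    have "I3_mult (I3_mult u ?A) v = I3_mult (\<phi> (I3_mult u' (E (a, a, a)))) (\<phi> v')"
      using u' v' Ein by (simp add: a_mult)
    also have "\<dots> = \<phi> (I3_mult (I3_mult u' (E (a, a, a))) v')"
      using u' v' Ein by (simp add: a_mult mult_in)
    also have "\<dots> = \<phi> (I3_mult u' (I3_mult (E (a, a, a)) v'))" by (simp add: diag_nucleus)
    also have "\<dots> = I3_mult (\<phi> u') (\<phi> (I3_mult (E (a, a, a)) v'))"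
      using u' v' Ein by (simp add: a_mult mult_in)
    also have "\<dots> = I3_mult u (I3_mult ?A v)"
      using u' v' Ein by (simp add: a_mult)
    finally show ?thesis .
  qed
  have n: "I3_mult (I3_mult (E (p, p, q)) ?A) (E (q, r, r)) = I3_mult (E (p, p, q)) (I3_mult ?A (E (q, r, r)))"
    using assms by (intro nuc E_in) auto
  show ?thesis
  proof (cases "q = r")
    case False
    with assms have "q < r" by auto
    have "I3_mult (I3_mult (E (p, p, q)) ?A) (E (q, r, r)) (p, r, r) = I3_mult (E (p, p, q)) (I3_mult ?A (E (q, r, r))) (p, r, r)"
      using n by simp
    then show ?thesis using assms \<open>q < r\<close> by (auto simp add: mult_E_left mult_E_right)
  next
    case True
    with assms have "p < q" by auto
    have "I3_mult (I3_mult (E (p, p, q)) ?A) (E (q, r, r)) (p, p, r) = I3_mult (E (p, p, q)) (I3_mult ?A (E (q, r, r))) (p, p, r)"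
      using n by simp
    then show ?thesis using assms True \<open>p < q\<close> by (auto simp add: mult_E_left mult_E_right)
  qed
qed


lemma Delta_mult: "I3_mult (E (a, a, a)) (E (b, b, b)) = (if a = b then E (a, a, a) else (\<lambda>s. 0::'r))"
  by (auto simp: fun_eq_iff mult_Delta_left) (auto simp: E_def)

lemma Delta_in: "(E (a, a, a) :: _ \<Rightarrow> 'r) \<in> I3" by (rule E_in) auto

lemma diag_idem: "\<phi> (E (a, a, a)) (y, y, y) * \<phi> (E (a, a, a)) (y, y, y) = \<phi> (E (a, a, a)) (y, y, y)"
proof -
  have "I3_mult (\<phi> (E (a, a, a))) (\<phi> (E (a, a, a))) = \<phi> (I3_mult (E (a, a, a)) (E (a, a, a)))"
    by (rule a_mult[OF Delta_in Delta_in, symmetric])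
  also have "\<dots> = \<phi> (E (a, a, a))" by (simp add: Delta_mult)
  finally have "I3_mult (\<phi> (E (a, a, a))) (\<phi> (E (a, a, a))) (y, y, y) = \<phi> (E (a, a, a)) (y, y, y)" by simp
  then show ?thesis by (simp only: mult_diag)
qed

lemma diag_orth: "a \<noteq> b \<Longrightarrow> \<phi> (E (a, a, a)) (y, y, y) * \<phi> (E (b, b, b)) (y, y, y) = 0"
proof -
  assume "a \<noteq> b"
  then have "I3_mult (\<phi> (E (a, a, a))) (\<phi> (E (b, b, b))) = (\<lambda>s. 0)"
    using a_mult[OF Delta_in Delta_in, of a b] Delta_mult[of a b] a_zero by simp
  then show ?thesis by (metis mult_diag)
qed

lemma diag01: "\<phi> (E (a, a, a)) (y, y, y) = 0 \<or> \<phi> (E (a, a, a)) (y, y, y) = 1"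
  using idem diag_idem by blast

lemma diag_ex: "\<exists>y. \<phi> (E (a, a, a)) (y, y, y) = 1"
proof -
  have "\<phi> (E (a, a, a)) \<noteq> (\<lambda>s. 0)" by (rule a_nonzero[OF Delta_in E_nonzero])
  then obtain p q r where nz: "\<phi> (E (a, a, a)) (p, q, r) \<noteq> 0" by (auto simp: fun_eq_iff)
  have inI: "\<phi> (E (a, a, a)) \<in> I3" by (rule a_in_I3[OF Delta_in])
  have "p \<le> q \<and> q \<le> r" using nz inI unfolding I3_def by blast
  with nz diag_supp have "p = q \<and> q = r" by blast
  with nz diag01 show ?thesis by blast
qed

definition sig :: "'a \<Rightarrow> 'a" where "sig a = (SOME y. \<phi> (E (a, a, a)) (y, y, y) = 1)"

lemma sig_spec: "\<phi> (E (a, a, a)) (sig a, sig a, sig a) = 1"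
  unfolding sig_def using diag_ex by (rule someI_ex)

lemma sig_inj: "inj sig"
proof (rule injI)
  fix a b assume "sig a = sig b"
  show "a = b"
  proof (rule ccontr)
    assume "a \<noteq> b"
    from diag_orth[OF this, of "sig a"] sig_spec[of a] sig_spec[of b] \<open>sig a = sig b\<close>
    show False using zero_ne_one by simp
  qed
qed

lemma sig_surj: "surj sig"
  using sig_inj by (simp add: finite_UNIV_inj_surj)

lemma sig_bij: "bij sig" using sig_inj sig_surj by (simp add: bij_def)

lemma sig_unique: "\<phi> (E (a, a, a)) (y, y, y) = 1 \<Longrightarrow> y = sig a"
proof -
  assume h: "\<phi> (E (a, a, a)) (y, y, y) = 1"
  obtain b where b: "y = sig b" using sig_surj by (metis surjD)
  show ?thesis
  proof (cases "a = b")
    case False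
    have "\<phi> (E (a, a, a)) (y, y, y) * \<phi> (E (b, b, b)) (y, y, y) = 0" by (rule diag_orth[OF False])
    then have "(1::'r) = 0" using h sig_spec[of b] b by simp
    then show ?thesis using zero_ne_one by simp
  qed (use b in simp)
qed

lemma phi_Delta: "\<phi> (E (a, a, a)) = E (sig a, sig a, sig a)"
proof (rule ext, clarify)
  fix p q r
  have inI: "\<phi> (E (a, a, a)) \<in> I3" by (rule a_in_I3[OF Delta_in])
  show "\<phi> (E (a, a, a)) (p, q, r) = E (sig a, sig a, sig a) (p, q, r)"
  proof (cases "p = q \<and> q = r")
    case True
    then have pqr: "(p, q, r) = (p, p, p)" by simp
    show ?thesis
    proof (cases "\<phi> (E (a, a, a)) (p, p, p) = 1")
      case True
      then have "p = sig a" by (rule sig_unique)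
      then show ?thesis using True pqr by (simp add: E_def)
    next
      case False
      then have z: "\<phi> (E (a, a, a)) (p, p, p) = 0" using diag01 by blast
      have "p \<noteq> sig a" using False sig_spec[of a] by metis
      then show ?thesis using z pqr by (simp add: E_def)
    qed
  next
    case False
    then have "\<phi> (E (a, a, a)) (p, q, r) = 0"
      using inI diag_supp[of p q r a] unfolding I3_def by blast
    then show ?thesis using False by (auto simp: E_def)
  qed
qed


lemma step_C:
  assumes ab: "a \<le> b"
  shows "\<phi> (E (a, a, b)) = E (sig a, sig a, sig b) \<and> \<phi> (E (a, b, b)) = E (sig a, sig b, sig b) \<and> sig a \<le> sig b"
proof -
  define g where "g = \<phi> (E (a, a, b))"
  define h where "h = \<phi> (E (a, b, b))"
  define c where "c = sig a"
  define d where "d = sig b"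
  have Eaab: "(E (a, a, b) :: _ \<Rightarrow> 'r) \<in> I3" using ab by (intro E_in) auto
  have Eabb: "(E (a, b, b) :: _ \<Rightarrow> 'r) \<in> I3" using ab by (intro E_in) auto
  have Ea: "(E (a, a, a) :: _ \<Rightarrow> 'r) \<in> I3" by (rule Delta_in)
  have Eb: "(E (b, b, b) :: _ \<Rightarrow> 'r) \<in> I3" by (rule Delta_in)
  have g1: "g = I3_mult (E (c, c, c)) g"
    unfolding g_def c_def using a_mult[OF Ea Eaab] EL1[OF ab] phi_Delta by metis
  have h1: "h = I3_mult h (E (d, d, d))"
    unfolding h_def d_def using a_mult[OF Eabb Eb] EL2[OF ab] phi_Delta by metis
  have g2: "g = I3_mult (E (c, c, c)) (I3_mult g h)"
    unfolding g_def h_def c_def using a_mult[OF Ea mult_in] a_mult[OF Eaab Eabb] EL3[OF ab] phi_Delta by metis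
  have h2: "h = I3_mult (I3_mult g h) (E (d, d, d))"
    unfolding g_def h_def d_def using a_mult[OF mult_in Eb] a_mult[OF Eaab Eabb] EL4[OF ab] phi_Delta by metis
  have gs: "g (x1, x2, x3) = 0" if "\<not> (x1 = c \<and> x2 = c)" for x1 x2 x3
  proof -
    have "g (x1, x2, x3) = I3_mult (E (c, c, c)) g (x1, x2, x3)" using g1 by simp
    then show ?thesis using that by (auto simp add: mult_Delta_left)
  qed
  have hs: "h (x1, x2, x3) = 0" if "\<not> (x2 = d \<and> x3 = d)" for x1 x2 x3
  proof -
    have "h (x1, x2, x3) = I3_mult h (E (d, d, d)) (x1, x2, x3)" using h1 by simp
    then show ?thesis using that by (auto simp add: mult_Delta_right)
  qed
  have gh: "I3_mult g h (x1, x2, x3) =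
    (if x1 \<le> c \<and> c \<le> x2 \<and> x2 \<le> d \<and> d \<le> x3 then g (x1, c, d) * h (c, d, x3) else 0)" for x1 x2 x3
  proof (rule mult_single)
    fix y1 y2 assume "(y1, y2) \<noteq> (c, d)"
    then have "y1 \<noteq> c \<or> y2 \<noteq> d" by simp
    then show "g (x1, y1, y2) * h (y1, y2, x3) = 0" using gs hs by auto
  qed
  define g0 where "g0 = g (c, c, d)"
  define h0 where "h0 = h (c, d, d)"
  have gf: "g (x1, x2, x3) = (if x1 = c \<and> x2 = c \<and> x3 = d \<and> c \<le> d then g0 * h0 else 0)" for x1 x2 x3
  proof -
    have "g (x1, x2, x3) = I3_mult (E (c, c, c)) (I3_mult g h) (x1, x2, x3)" using g2 by simp
    also have "\<dots> = (if x1 = c \<and> x2 = c \<and> c \<le> x3 then I3_mult g h (c, c, x3) else 0)"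
      by (simp add: mult_Delta_left)
    also have "\<dots> = (if x1 = c \<and> x2 = c \<and> x3 = d \<and> c \<le> d then g0 * h0 else 0)"
      by (cases "x3 = d") (auto simp: gh g0_def h0_def hs)
    finally show ?thesis .
  qed
  have hf: "h (x1, x2, x3) = (if x1 = c \<and> x2 = d \<and> x3 = d \<and> c \<le> d then g0 * h0 else 0)" for x1 x2 x3
  proof -
    have "h (x1, x2, x3) = I3_mult (I3_mult g h) (E (d, d, d)) (x1, x2, x3)" using h2 by simp
    also have "\<dots> = (if x2 = d \<and> x3 = d \<and> x1 \<le> d then I3_mult g h (x1, d, d) else 0)"
      by (simp add: mult_Delta_right)
    also have "\<dots> = (if x1 = c \<and> x2 = d \<and> x3 = d \<and> c \<le> d then g0 * h0 else 0)"
      by (cases "x1 = c") (auto simp: gh g0_def h0_def gs intro: order_trans)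
    finally show ?thesis .
  qed
  have gnz: "g \<noteq> (\<lambda>s. 0)" unfolding g_def by (rule a_nonzero[OF Eaab E_nonzero])
  have cd: "c \<le> d"
  proof (rule ccontr)
    assume "\<not> c \<le> d"
    then have "g = (\<lambda>s. 0)" by (auto simp: fun_eq_iff gf)
    with gnz show False by simp
  qed
  have e1: "g0 = g0 * h0" using gf[of c c d] cd g0_def by simp
  have e2: "h0 = g0 * h0" using hf[of c d d] cd h0_def by simp
  have "g0 * g0 = g0" using e1 e2 by simp
  then have "g0 = 0 \<or> g0 = 1" by (rule idem)
  moreover have "g0 \<noteq> 0"
  proof
    assume "g0 = 0"
    then have "g = (\<lambda>s. 0)" by (auto simp: fun_eq_iff gf)
    with gnz show False by simp
  qed
  ultimately have g01: "g0 = 1" by simp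
  with e1 e2 have h01: "h0 = 1" by simp
  have "g = E (c, c, d)" using g01 h01 cd by (auto simp: fun_eq_iff gf E_def)
  moreover have "h = E (c, d, d)" using g01 h01 cd by (auto simp: fun_eq_iff hf E_def)
  ultimately show ?thesis using cd unfolding g_def h_def c_def d_def by simp
qed

lemma sig_mono: "a \<le> b \<Longrightarrow> sig a \<le> sig b" using step_C by blast

lemma phi_E: assumes "p \<le> q" "q \<le> r" shows "\<phi> (E (p, q, r)) = E (sig p, sig q, sig r)"
proof -
  have "\<phi> (E (p, q, r)) = \<phi> (I3_mult (E (p, q, q)) (E (q, q, r)))" by (simp add: E_EE[OF assms])
  also have "\<dots> = I3_mult (\<phi> (E (p, q, q))) (\<phi> (E (q, q, r)))"
    using assms by (intro a_mult E_in) auto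
  also have "\<dots> = I3_mult (E (sig p, sig q, sig q)) (E (sig q, sig q, sig r))"
    using step_C[OF assms(1)] step_C[OF assms(2)] by simp
  also have "\<dots> = E (sig p, sig q, sig r)" using assms by (intro E_EE sig_mono)
  finally show ?thesis .
qed

lemma sig_order: "x \<le> y \<longleftrightarrow> sig x \<le> sig y"
proof
  assume "sig x \<le> sig y"
  let ?Q = "{(u, v). (u::'a) \<le> v}"
  let ?m = "\<lambda>(u, v). (sig u, sig v)"
  have "?m ` ?Q = ?Q"
  proof (rule endo_inj_surj)
    show "finite ?Q" by (rule finite_subset[OF subset_UNIV]) simp
    show "?m ` ?Q \<subseteq> ?Q" using sig_mono by auto
    show "inj_on ?m ?Q" using sig_inj by (auto simp: inj_on_def dest: injD)
  qed
  then have "(sig x, sig y) \<in> ?m ` ?Q" using \<open>sig x \<le> sig y\<close> by simp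
  then obtain u v where "u \<le> v" "sig x = sig u" "sig y = sig v" by auto
  then show "x \<le> y" using sig_inj by (auto dest: injD)
qed (rule sig_mono)


lemma phi_lin: "finite A \<Longrightarrow> A \<subseteq> tri \<Longrightarrow> \<phi> (\<lambda>s. \<Sum>t\<in>A. c t * E t s) = (\<lambda>s. \<Sum>t\<in>A. c t * \<phi> (E t) s)"
proof (induction A rule: finite_induct)
  case empty
  then show ?case using a_zero by simp
next
  case (insert t A)
  have tA: "t \<in> tri" "A \<subseteq> tri" using insert by auto
  have m1: "I3_smult (c t) (E t) \<in> I3" using E_in_tri[OF tA(1)] unfolding I3_smult_def I3_def mem_Collect_eq
    by (metis mult_zero_right)
  have m2: "(\<lambda>s. \<Sum>t\<in>A. c t * E t s) \<in> I3" by (rule sumE_in[OF tA(2)])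
  have eq: "(\<lambda>s. \<Sum>t\<in>insert t A. c t * E t s) = (\<lambda>s. I3_smult (c t) (E t) s + (\<lambda>s. \<Sum>t\<in>A. c t * E t s) s)"
    using insert by (simp add: I3_smult_def)
  have "\<phi> (\<lambda>s. \<Sum>t\<in>insert t A. c t * E t s) = (\<lambda>s. \<phi> (I3_smult (c t) (E t)) s + \<phi> (\<lambda>s. \<Sum>t\<in>A. c t * E t s) s)"
    unfolding eq by (rule a_add[OF m1 m2])
  also have "\<dots> = (\<lambda>s. \<Sum>t\<in>insert t A. c t * \<phi> (E t) s)"
    using insert tA a_smult[OF E_in_tri[OF tA(1)]] by (simp add: I3_smult_def)
  finally show ?case .
qed

lemma phi_eq: assumes f: "f \<in> I3" shows "\<phi> f = Phi sig f"
proof (rule ext, clarify)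
  fix x y z
  have fin: "finite (tri :: ('a \<times> 'a \<times> 'a) set)" by (rule finite_subset[OF subset_UNIV]) simp
  let ?t0 = "(inv_into UNIV sig x, inv_into UNIV sig y, inv_into UNIV sig z)"
  have "\<phi> f = \<phi> (\<lambda>s. \<Sum>t\<in>tri. f t * E t s)" using decomp[OF f] by simp
  also have "\<dots> = (\<lambda>s. \<Sum>t\<in>tri. f t * \<phi> (E t) s)" by (rule phi_lin[OF fin subset_refl])
  finally have "\<phi> f (x, y, z) = (\<Sum>t\<in>tri. f t * \<phi> (E t) (x, y, z))" by simp
  also have "\<dots> = (\<Sum>t\<in>tri. f t * E ((\<lambda>(p, q, r). (sig p, sig q, sig r)) t) (x, y, z))"
    by (rule sum.cong) (auto simp: tri_def phi_E)
  also have "\<dots> = (if ?t0 \<in> tri then f ?t0 * E ((\<lambda>(p, q, r). (sig p, sig q, sig r)) ?t0) (x, y, z) else 0)"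
    apply (rule sum_single[OF fin])
    using sig_bij by (auto simp: E_def bij_def inv_f_f surj_f_inv_f)
  also have "\<dots> = f ?t0"
    using f sig_bij by (auto simp: E_def tri_def I3_def bij_def surj_f_inv_f)
  also have "\<dots> = Phi sig f (x, y, z)" using f by (simp add: Phi_def)
  finally show "\<phi> f (x, y, z) = Phi sig f (x, y, z)" .
qed

lemma phi_Phi: "\<phi> = Phi sig"
proof
  fix f show "\<phi> f = Phi sig f"
  proof (cases "f \<in> I3")
    case True then show ?thesis by (rule phi_eq)
  next
    case False
    have "\<phi> \<in> extensional I3" using aut by (simp add: I3_auts_def)
    then show ?thesis using False by (simp add: Phi_def extensional_def)
  qed
qed

end


definition isAut :: "('a::order \<Rightarrow> 'a) \<Rightarrow> bool" where
  "isAut \<sigma> \<longleftrightarrow> bij \<sigma> \<and> (\<forall>x y. x \<le> y \<longleftrightarrow> \<sigma> x \<le> \<sigma> y)"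

lemma isAut_inv:
  assumes "isAut \<sigma>"
  shows "isAut (inv_into UNIV \<sigma>)" "\<And>x. \<sigma> (inv_into UNIV \<sigma> x) = x" "\<And>x. inv_into UNIV \<sigma> (\<sigma> x) = x"
proof -
  have b: "bij \<sigma>" using assms by (simp add: isAut_def)
  show 1: "\<And>x. \<sigma> (inv_into UNIV \<sigma> x) = x" using b by (simp add: bij_def surj_f_inv_f)
  show 2: "\<And>x. inv_into UNIV \<sigma> (\<sigma> x) = x" using b by (simp add: bij_def inv_f_f)
  show "isAut (inv_into UNIV \<sigma>)" unfolding isAut_def
  proof
    show "bij (inv_into UNIV \<sigma>)" using b by (rule bij_imp_bij_inv)
    show "\<forall>x y. x \<le> y \<longleftrightarrow> inv_into UNIV \<sigma> x \<le> inv_into UNIV \<sigma> y"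
      using assms 1 unfolding isAut_def by metis
  qed
qed

lemma isAut_comp: "isAut \<sigma> \<Longrightarrow> isAut \<tau> \<Longrightarrow> isAut (\<sigma> \<circ> \<tau>)"
  unfolding isAut_def by (auto intro: bij_comp)

lemma isAut_ord: "isAut \<sigma> \<Longrightarrow> x \<le> y \<longleftrightarrow> \<sigma> x \<le> \<sigma> y"
  unfolding isAut_def by blast

lemma Phi_app: "f \<in> I3 \<Longrightarrow> Phi \<sigma> f (x, y, z) = f (inv_into UNIV \<sigma> x, inv_into UNIV \<sigma> y, inv_into UNIV \<sigma> z)"
  by (simp add: Phi_def)

lemma Phi_in: assumes "isAut \<sigma>" "f \<in> I3" shows "Phi \<sigma> f \<in> I3"
proof -
  note i = isAut_inv[OF assms(1)]
  have "Phi \<sigma> f = (\<lambda>(x, y, z). f (inv_into UNIV \<sigma> x, inv_into UNIV \<sigma> y, inv_into UNIV \<sigma> z))"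
    using assms(2) by (simp add: Phi_def)
  then show ?thesis using assms(2) isAut_ord[OF i(1)] unfolding I3_def by auto
qed

lemma Phi_comp: assumes "isAut \<sigma>" "isAut \<tau>" "f \<in> I3"
  shows "Phi \<sigma> (Phi \<tau> f) = Phi (\<sigma> \<circ> \<tau>) f"
proof -
  have "inv_into UNIV (\<sigma> \<circ> \<tau>) = inv_into UNIV \<tau> \<circ> inv_into UNIV \<sigma>"
    using assms by (simp add: isAut_def o_inv_distrib)
  then show ?thesis using assms Phi_in[OF assms(2,3)] by (auto simp: Phi_def fun_eq_iff)
qed

lemma Phi_id: "f \<in> I3 \<Longrightarrow> Phi id f = f"
  by (auto simp: Phi_def fun_eq_iff inv_id[unfolded inv_def])

lemma Phi_Delta: assumes "isAut \<sigma>"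
  shows "Phi \<sigma> (E (a, a, a)) = (E (\<sigma> a, \<sigma> a, \<sigma> a) :: _ \<Rightarrow> 'r::comm_ring_1)"
proof -
  note i = isAut_inv[OF assms]
  have "(E (a, a, a) :: _ \<Rightarrow> 'r) \<in> I3" by (rule E_in) auto
  then show ?thesis using i by (auto simp: Phi_def fun_eq_iff E_def) (metis i(2))+
qed

lemma Phi_mult: assumes "isAut \<sigma>" and that: "f \<in> I3" "g \<in> I3"
  shows "Phi \<sigma> (I3_mult f g) = I3_mult (Phi \<sigma> f) (Phi \<sigma> (g :: 'a::{finite,order} \<times> 'a \<times> 'a \<Rightarrow> 'r::comm_ring_1))"
proof (rule ext, clarify)
  fix x1 x2 x3 :: 'a
  note i = isAut_inv[OF assms(1)]
  define s where "s = inv_into UNIV \<sigma>"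
  have so: "\<And>a b. a \<le> b \<longleftrightarrow> s a \<le> s b" unfolding s_def by (rule isAut_ord[OF i(1)])
  have ss: "\<And>a. s (\<sigma> a) = a" "\<And>a. \<sigma> (s a) = a" unfolding s_def using i by auto
  let ?S = "\<lambda>x1 x2 x3. {(y1, y2). x1 \<le> y1 \<and> y1 \<le> x2 \<and> x2 \<le> y2 \<and> y2 \<le> x3}"
  let ?m = "\<lambda>(y1, y2). (s y1, s y2)"
  have img: "?S (s x1) (s x2) (s x3) = ?m ` ?S x1 x2 x3"
  proof
    show "?m ` ?S x1 x2 x3 \<subseteq> ?S (s x1) (s x2) (s x3)" using so by auto
    show "?S (s x1) (s x2) (s x3) \<subseteq> ?m ` ?S x1 x2 x3"
    proof clarify
      fix z1 z2 assume h: "s x1 \<le> z1" "z1 \<le> s x2" "s x2 \<le> z2" "z2 \<le> s x3"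
      have "(\<sigma> z1, \<sigma> z2) \<in> ?S x1 x2 x3" using h so ss by (auto) (metis)+
      moreover have "(z1, z2) = ?m (\<sigma> z1, \<sigma> z2)" using ss by simp
      ultimately show "(z1, z2) \<in> ?m ` ?S x1 x2 x3" by blast
    qed
  qed
  have inj: "inj_on ?m (?S x1 x2 x3)" unfolding inj_on_def using ss by (auto) (metis)+
  have PF: "Phi \<sigma> f = (\<lambda>(a, b, c). f (s a, s b, s c))" using that by (simp add: Phi_def s_def)
  have PG: "Phi \<sigma> g = (\<lambda>(a, b, c). g (s a, s b, s c))" using that by (simp add: Phi_def s_def)
  have "Phi \<sigma> (I3_mult f g) (x1, x2, x3) = I3_mult f g (s x1, s x2, s x3)"
    by (simp add: Phi_def s_def mult_in)
  also have "\<dots> = (if x1 \<le> x2 \<and> x2 \<le> x3 then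
       (\<Sum>(y1, y2) \<in> ?S (s x1) (s x2) (s x3). f (s x1, y1, y2) * g (y1, y2, s x3)) else 0)"
    unfolding I3_mult_def using so by simp
  also have "\<dots> = (if x1 \<le> x2 \<and> x2 \<le> x3 then
       (\<Sum>(y1, y2) \<in> ?S x1 x2 x3. f (s x1, s y1, s y2) * g (s y1, s y2, s x3)) else 0)"
    unfolding img by (subst sum.reindex[OF inj]) (simp add: comp_def case_prod_beta)
  also have "\<dots> = I3_mult (Phi \<sigma> f) (Phi \<sigma> g) (x1, x2, x3)"
    unfolding I3_mult_def PF PG by simp
  finally show "Phi \<sigma> (I3_mult f g) (x1, x2, x3) = I3_mult (Phi \<sigma> f) (Phi \<sigma> g) (x1, x2, x3)" .
qed


lemma Phi_aut: assumes a: "isAut \<sigma>"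
  shows "(Phi \<sigma> :: ('a::{finite,order} \<times> 'a \<times> 'a \<Rightarrow> 'r::comm_ring_1) \<Rightarrow> _) \<in> I3_auts"
proof -
  note i = isAut_inv[OF a]
  have ext: "Phi \<sigma> \<in> extensional I3" unfolding Phi_def by (rule restrict_extensional)
  have c1: "inv_into UNIV \<sigma> \<circ> \<sigma> = id" "\<sigma> \<circ> inv_into UNIV \<sigma> = id" using i by (auto simp: fun_eq_iff)
  have bij: "bij_betw (Phi \<sigma>) I3 (I3 :: ('a \<times> 'a \<times> 'a \<Rightarrow> 'r) set)"
  proof (rule bij_betwI[where g = "Phi (inv_into UNIV \<sigma>)"])
    show "Phi \<sigma> \<in> I3 \<rightarrow> I3" using Phi_in[OF a] by blast
    show "Phi (inv_into UNIV \<sigma>) \<in> I3 \<rightarrow> I3" using Phi_in[OF i(1)] by blast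
    show "Phi (inv_into UNIV \<sigma>) (Phi \<sigma> x) = x" if "x \<in> I3" for x :: "'a \<times> 'a \<times> 'a \<Rightarrow> 'r"
      using Phi_comp[OF i(1) a that] c1 Phi_id[OF that] by simp
    show "Phi \<sigma> (Phi (inv_into UNIV \<sigma>) x) = x" if "x \<in> I3" for x :: "'a \<times> 'a \<times> 'a \<Rightarrow> 'r"
      using Phi_comp[OF a i(1) that] c1 Phi_id[OF that] by simp
  qed
  have add: "Phi \<sigma> (\<lambda>t. f t + g t) = (\<lambda>t. Phi \<sigma> f t + Phi \<sigma> g t)" if "f \<in> I3" "g \<in> I3" for f g :: "'a \<times> 'a \<times> 'a \<Rightarrow> 'r"
  proof -
    have "(\<lambda>t. f t + g t) \<in> I3" using that unfolding I3_def by auto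
    then show ?thesis using that by (auto simp: Phi_def fun_eq_iff)
  qed
  have sm: "Phi \<sigma> (I3_smult r f) = I3_smult r (Phi \<sigma> f)" if "f \<in> I3" for f :: "'a \<times> 'a \<times> 'a \<Rightarrow> 'r" and r
  proof -
    have "I3_smult r f \<in> I3" using that unfolding I3_def I3_smult_def by auto
    then show ?thesis using that by (auto simp: Phi_def fun_eq_iff I3_smult_def)
  qed
  show ?thesis unfolding I3_auts_def using ext bij add sm Phi_mult[OF a] by blast
qed

lemma Phi_bij:
  assumes indec: "indecomposable_ring TYPE('r::comm_ring_1)"
  shows "bij_betw (Phi :: ('a::{finite,order} \<Rightarrow> 'a) \<Rightarrow> ('a \<times> 'a \<times> 'a \<Rightarrow> 'r) \<Rightarrow> _) (Collect isAut) I3_auts"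
  unfolding bij_betw_def
proof
  have z: "(0::'r) \<noteq> 1" using indec unfolding indecomposable_ring_def by auto
  show "inj_on (Phi :: ('a \<Rightarrow> 'a) \<Rightarrow> ('a \<times> 'a \<times> 'a \<Rightarrow> 'r) \<Rightarrow> _) (Collect isAut)"
  proof (rule inj_onI)
    fix \<sigma> \<tau> :: "'a \<Rightarrow> 'a"
    assume s: "\<sigma> \<in> Collect isAut" and t: "\<tau> \<in> Collect isAut"
      and eq: "(Phi \<sigma> :: ('a \<times> 'a \<times> 'a \<Rightarrow> 'r) \<Rightarrow> _) = Phi \<tau>"
    show "\<sigma> = \<tau>"
    proof
      fix a
      have "(E (\<sigma> a, \<sigma> a, \<sigma> a) :: _ \<Rightarrow> 'r) = E (\<tau> a, \<tau> a, \<tau> a)"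
        using Phi_Delta[of \<sigma> a] Phi_Delta[of \<tau> a] s t eq by (metis mem_Collect_eq)
      then have "(E (\<sigma> a, \<sigma> a, \<sigma> a) :: _ \<Rightarrow> 'r) (\<sigma> a, \<sigma> a, \<sigma> a) = E (\<tau> a, \<tau> a, \<tau> a) (\<sigma> a, \<sigma> a, \<sigma> a)"
        by simp
      then show "\<sigma> a = \<tau> a" using z by (auto simp: E_def split: if_splits)
    qed
  qed
  show "(Phi :: ('a \<Rightarrow> 'a) \<Rightarrow> ('a \<times> 'a \<times> 'a \<Rightarrow> 'r) \<Rightarrow> _) ` Collect isAut = I3_auts"
  proof
    show "(Phi :: ('a \<Rightarrow> 'a) \<Rightarrow> ('a \<times> 'a \<times> 'a \<Rightarrow> 'r) \<Rightarrow> _) ` Collect isAut \<subseteq> I3_auts"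
      using Phi_aut by blast
    show "I3_auts \<subseteq> (Phi :: ('a \<Rightarrow> 'a) \<Rightarrow> ('a \<times> 'a \<times> 'a \<Rightarrow> 'r) \<Rightarrow> _) ` Collect isAut"
    proof
      fix \<phi> :: "('a \<times> 'a \<times> 'a \<Rightarrow> 'r) \<Rightarrow> _" assume pa: "\<phi> \<in> I3_auts"
      interpret autI3 \<phi> using pa indec by (rule autI3.intro)
      have "isAut sig" unfolding isAut_def using sig_bij sig_order by blast
      then show "\<phi> \<in> Phi ` Collect isAut" using phi_Phi by blast
    qed
  qed
qed

lemma compose_Phi: assumes "isAut \<sigma>" "isAut \<tau>"
  shows "compose I3 (Phi \<sigma>) (Phi \<tau>) = (Phi (\<sigma> \<circ> \<tau>) :: ('a::{finite,order} \<times> 'a \<times> 'a \<Rightarrow> 'r::comm_ring_1) \<Rightarrow> _)"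
proof
  fix f :: "'a \<times> 'a \<times> 'a \<Rightarrow> 'r"
  show "compose I3 (Phi \<sigma>) (Phi \<tau>) f = Phi (\<sigma> \<circ> \<tau>) f"
    using Phi_comp[OF assms, of f] by (cases "f \<in> I3") (auto simp: compose_def Phi_def)
qed

theorem corollary3p20:
  assumes "indecomposable_ring TYPE('r::comm_ring_1)"
  shows "Aut_I3 TYPE('a::{finite,order} \<times> 'a \<times> 'a \<Rightarrow> 'r) \<cong> Aut_poset TYPE('a)"
proof -
  let ?P = "Phi :: ('a \<Rightarrow> 'a) \<Rightarrow> ('a \<times> 'a \<times> 'a \<Rightarrow> 'r) \<Rightarrow> _"
  have bij: "bij_betw ?P (Collect isAut) I3_auts" by (rule Phi_bij[OF assms])
  define h where "h = inv_into (Collect isAut) ?P"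
  have hb: "bij_betw h I3_auts (Collect isAut)" unfolding h_def by (rule bij_betw_inv_into[OF bij])
  have injP: "inj_on ?P (Collect isAut)" using bij by (simp add: bij_betw_def)
  have Ph: "\<phi> \<in> I3_auts \<Longrightarrow> ?P (h \<phi>) = \<phi>" for \<phi>
    unfolding h_def using bij by (simp add: bij_betw_def f_inv_into_f)
  have hin: "\<phi> \<in> I3_auts \<Longrightarrow> isAut (h \<phi>)" for \<phi> using hb by (auto dest: bij_betwE)
  have carG: "carrier (Aut_poset TYPE('a)) = Collect isAut"
    by (auto simp: Aut_poset_def isAut_def)
  have hom: "h (compose I3 \<phi> \<psi>) = h \<phi> \<circ> h \<psi>" if "\<phi> \<in> I3_auts" "\<psi> \<in> I3_auts" for \<phi> \<psi>
  proof -
    have "compose I3 \<phi> \<psi> = compose I3 (?P (h \<phi>)) (?P (h \<psi>))" using Ph that by simp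
    also have "\<dots> = ?P (h \<phi> \<circ> h \<psi>)" by (rule compose_Phi[OF hin hin]) (use that in auto)
    finally have "h (compose I3 \<phi> \<psi>) = h (?P (h \<phi> \<circ> h \<psi>))" by simp
    also have "\<dots> = h \<phi> \<circ> h \<psi>"
    proof -
      have m: "h \<phi> \<circ> h \<psi> \<in> Collect isAut" using isAut_comp hin that by auto
      show ?thesis using inv_into_f_f[OF injP m] unfolding h_def by simp
    qed
    finally show ?thesis .
  qed
  have "h \<in> iso (Aut_I3 TYPE('a \<times> 'a \<times> 'a \<Rightarrow> 'r)) (Aut_poset TYPE('a))"
  proof (rule isoI)
    show "h \<in> hom (Aut_I3 TYPE('a \<times> 'a \<times> 'a \<Rightarrow> 'r)) (Aut_poset TYPE('a))"
      unfolding hom_def using hom hin carG by (auto simp: Aut_I3_def Aut_poset_def)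
    show "bij_betw h (carrier (Aut_I3 TYPE('a \<times> 'a \<times> 'a \<Rightarrow> 'r))) (carrier (Aut_poset TYPE('a)))"
      using hb carG by (simp add: Aut_I3_def)
  qed
  then show ?thesis by (rule is_isoI)
qed

end
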